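(* Let $G$ be a nice connected graph of size $m$, and let $W$ be a closed walk of $G$ of length $p$ going through all vertices of $G$. Then ${\rm ML}^{\rm W}(G) \leq p+2m$.
   Context: All graphs are finite and simple. A walk of a graph $G$ is a sequence of vertices $u_0u_1\dots u_p$ with $u_tu_{t+1}\in E(G)$ for all $t$ (vertices and edges may repeat); its length is $p$; it is closed if $u_0=u_p$. For a walk $W$ of $G$, $G+W$ is the multigraph on $V(G)$ whose edge multiset consists of $E(G)$ together with each edge added as many times as $W$ traverses it. A multigraph is locally irregular if no two adjacent vertices have the same degree; a walk $W$ is irregularising if $G+W$ is locally irregular. A graph is nice if it is connected and not isomorphic to $K_2$. ${\rm ML}^{\rm W}(G)$ denotes the minimum length of an irregularising walk of $G$ (a walk of length $0$ is allowed). *)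

theory Defs
  imports Main
begin

definition simple_graph :: "'a set \<Rightarrow> 'a set set \<Rightarrow> bool" where
  "simple_graph V E \<longleftrightarrow> finite V \<and> (\<forall>e\<in>E. \<exists>u v. e = {u, v} \<and> u \<noteq> v \<and> u \<in> V \<and> v \<in> V)"

definition is_walk :: "'a set \<Rightarrow> 'a set set \<Rightarrow> 'a list \<Rightarrow> bool" where
  "is_walk V E W \<longleftrightarrow> W \<noteq> [] \<and> set W \<subseteq> V \<and>
     (\<forall>i. Suc i < length W \<longrightarrow> {W ! i, W ! Suc i} \<in> E)"

definition walk_length :: "'a list \<Rightarrow> nat" where
  "walk_length W = length W - 1"

definition closed_walk :: "'a set \<Rightarrow> 'a set set \<Rightarrow> 'a list \<Rightarrow> bool" where
  "closed_walk V E W \<longleftrightarrow> is_walk V E W \<and> hd W = last W"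

definition connected_graph :: "'a set \<Rightarrow> 'a set set \<Rightarrow> bool" where
  "connected_graph V E \<longleftrightarrow> V \<noteq> {} \<and>
     (\<forall>u\<in>V. \<forall>v\<in>V. \<exists>W. is_walk V E W \<and> hd W = u \<and> last W = v)"

text \<open>Nice: connected and not isomorphic to K2 (for simple graphs, K2 is exactly
  two vertices and one edge).\<close>
definition nice_graph :: "'a set \<Rightarrow> 'a set set \<Rightarrow> bool" where
  "nice_graph V E \<longleftrightarrow> connected_graph V E \<and> \<not> (card V = 2 \<and> card E = 1)"

definition traversals :: "'a list \<Rightarrow> 'a set \<Rightarrow> nat" where
  "traversals W e = card {i. Suc i < length W \<and> {W ! i, W ! Suc i} = e}"

text \<open>Degree of v in the multigraph G + W.\<close>
definition deg_plus :: "'a set set \<Rightarrow> 'a list \<Rightarrow> 'a \<Rightarrow> nat" where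
  "deg_plus E W v = (\<Sum>e\<in>{e\<in>E. v \<in> e}. 1 + traversals W e)"

text \<open>G + W is locally irregular: adjacent vertices have distinct degrees
  (adjacency in G + W coincides with adjacency in G).\<close>
definition irregularising :: "'a set \<Rightarrow> 'a set set \<Rightarrow> 'a list \<Rightarrow> bool" where
  "irregularising V E W \<longleftrightarrow> is_walk V E W \<and>
     (\<forall>u v. {u, v} \<in> E \<longrightarrow> u \<noteq> v \<longrightarrow> deg_plus E W u \<noteq> deg_plus E W v)"

definition min_irreg_walk_length :: "'a set \<Rightarrow> 'a set set \<Rightarrow> nat" where
  "min_irreg_walk_length V E = (LEAST k. \<exists>W. irregularising V E W \<and> walk_length W = k)"

end

theory Submission
  imports Defs
begin

lemma is_walk_Cons2:
  "is_walk V E (x#y#r) \<longleftrightarrow> x \<in> V \<and> {x,y} \<in> E \<and> is_walk V E (y#r)"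
proof -
  have "(\<forall>i. Suc i < length (x#y#r) \<longrightarrow> {(x#y#r) ! i, (x#y#r) ! Suc i} \<in> E) \<longleftrightarrow>
        {x,y} \<in> E \<and> (\<forall>i. Suc i < length (y#r) \<longrightarrow> {(y#r) ! i, (y#r) ! Suc i} \<in> E)"
    (is "?A \<longleftrightarrow> ?B")
  proof
    assume ?A
    then show ?B by (metis Suc_less_eq length_Cons nth_Cons_Suc nth_Cons_0 zero_less_Suc)
  next
    assume b: ?B
    show ?A
    proof (intro allI impI)
      fix i assume "Suc i < length (x#y#r)"
      then show "{(x#y#r) ! i, (x#y#r) ! Suc i} \<in> E" using b by (cases i) auto
    qed
  qed
  then show ?thesis unfolding is_walk_def by auto
qed

lemma is_walk_single: "is_walk V E [x] \<longleftrightarrow> x \<in> V"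
  unfolding is_walk_def by auto

lemma is_walk_app:
  "is_walk V E (xs @ u # ys) \<longleftrightarrow> is_walk V E (xs @ [u]) \<and> is_walk V E (u # ys)"
proof (induction xs rule: induct_list012)
  case 1
  then show ?case by (auto simp: is_walk_def)
next
  case (2 x)
  then show ?case by (simp add: is_walk_Cons2 is_walk_single) (auto simp: is_walk_def)
next
  case (3 x y zs)
  then show ?case by (simp add: is_walk_Cons2)
qed

lemma trav_Nil: "traversals [] e = 0" unfolding traversals_def by simp
lemma trav_single: "traversals [x] e = 0" unfolding traversals_def by simp

lemma trav_Cons2:
  "traversals (x#y#r) e = (if {x,y} = e then 1 else 0) + traversals (y#r) e"
proof -
  let ?S = "{i. Suc i < length (y#r) \<and> {(y#r) ! i, (y#r) ! Suc i} = e}"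
  have eq: "{i. Suc i < length (x#y#r) \<and> {(x#y#r) ! i, (x#y#r) ! Suc i} = e}
        = (if {x,y} = e then {0} else {}) \<union> Suc ` ?S"
    apply (rule set_eqI)
    subgoal for i by (cases i) auto
    done
  have fin: "finite ?S" by (rule finite_subset[of _ "{..<length (y#r)}"]) auto
  have "0 \<notin> Suc ` ?S" by auto
  then show ?thesis unfolding traversals_def eq
    using fin by (auto simp: card_image)
qed

lemma trav_app:
  "traversals (xs @ u # ys) e = traversals (xs @ [u]) e + traversals (u # ys) e"
proof (induction xs rule: induct_list012)
  case 1
  then show ?case by (simp add: trav_single)
next
  case (2 x)
  then show ?case by (simp add: trav_Cons2 trav_single)
next
  case (3 x y zs)
  then show ?case by (simp add: trav_Cons2)
qed


definition cnt :: "'a set list \<Rightarrow> 'a \<Rightarrow> nat" where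
  "cnt L v = length (filter (\<lambda>e. v \<in> e) L)"

lemma cnt_Nil[simp]: "cnt [] v = 0" unfolding cnt_def by simp
lemma cnt_Cons[simp]: "cnt (e#L) v = (if v \<in> e then 1 else 0) + cnt L v" unfolding cnt_def by simp
lemma cnt_app_rep: "cnt (L @ replicate x e) v = cnt L v + (if v \<in> e then x else 0)"
  unfolding cnt_def by (simp add: filter_replicate)

lemma sg_finE: "simple_graph V E \<Longrightarrow> finite E"
proof -
  assume sg: "simple_graph V E"
  then have "E \<subseteq> Pow V" unfolding simple_graph_def by fastforce
  moreover have "finite V" using sg unfolding simple_graph_def by metis
  ultimately show "finite E" using finite_subset by (metis finite_Pow_iff)
qed

lemma deg_insert:
  assumes fin: "finite E" and uw: "{u,w} \<in> E"
  shows "deg_plus E (xs @ u # w # u # ys) v = deg_plus E (xs @ u # ys) v + (if v \<in> {u,w} then 2 else 0)"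
proof -
  have t: "traversals (xs @ u # w # u # ys) e = traversals (xs @ u # ys) e + (if {u,w} = e then 2 else 0)" for e
    using trav_app[of xs u "w # u # ys" e] trav_app[of xs u ys e] by (simp add: trav_Cons2 insert_commute)
  have "deg_plus E (xs @ u # w # u # ys) v = (\<Sum>e\<in>{e\<in>E. v \<in> e}. (1 + traversals (xs @ u # ys) e) + (if {u,w} = e then 2 else 0))"
    unfolding deg_plus_def t by (simp add: add.assoc)
  also have "\<dots> = deg_plus E (xs @ u # ys) v + (\<Sum>e\<in>{e\<in>E. v \<in> e}. (if {u,w} = e then 2 else 0))"
    unfolding deg_plus_def by (rule sum.distrib)
  also have "(\<Sum>e\<in>{e\<in>E. v \<in> e}. (if {u,w} = e then 2 else 0)) = (if v \<in> {u,w} then (2::nat) else 0)"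
  proof -
    have "finite {e\<in>E. v \<in> e}" using fin by simp
    then have "(\<Sum>e\<in>{e\<in>E. v \<in> e}. (if {u,w} = e then (2::nat) else 0)) = (if {u,w} \<in> {e\<in>E. v \<in> e} then 2 else 0)"
      by (rule sum.delta')
    then show ?thesis using uw by simp
  qed
  finally show ?thesis .
qed

lemma ext_walk:
  assumes sg: "simple_graph V E" and wk: "is_walk V E W" and sW: "set W = V"
  shows "set L \<subseteq> E \<Longrightarrow> \<exists>W'. is_walk V E W' \<and> set W' = V \<and> length W' = length W + 2 * length L \<and>
     (\<forall>v. deg_plus E W' v = deg_plus E W v + 2 * cnt L v)"
proof (induction L)
  case Nil
  then show ?case using wk sW by auto
next
  case (Cons e L)
  then obtain W1 where w1: "is_walk V E W1" "set W1 = V" "length W1 = length W + 2 * length L"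
    "\<forall>v. deg_plus E W1 v = deg_plus E W v + 2 * cnt L v" by auto
  have "e \<in> E" using Cons by auto
  then obtain u w where e: "e = {u,w}" "u \<noteq> w" "u \<in> V" "w \<in> V"
    using sg unfolding simple_graph_def by metis
  then obtain xs ys where sp: "W1 = xs @ u # ys" using w1(2) by (metis split_list)
  let ?W = "xs @ u # w # u # ys"
  have "is_walk V E (xs @ [u])" "is_walk V E (u # ys)" using w1(1) sp is_walk_app[of V E xs u ys] by simp_all
  moreover have "{u,w} \<in> E" "{w,u} \<in> E" using \<open>e \<in> E\<close> e by (auto simp: insert_commute)
  ultimately have "is_walk V E ?W" using e is_walk_app[of V E xs u "w # u # ys"] by (simp add: is_walk_Cons2)
  moreover have "set ?W = V" using w1(2) sp e by auto
  moreover have "length ?W = length W + 2 * length (e#L)" using w1(3) sp by simp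
  moreover have "\<forall>v. deg_plus E ?W v = deg_plus E W v + 2 * cnt (e#L) v"
    using deg_insert[OF sg_finE[OF sg] \<open>{u,w} \<in> E\<close>, of xs ys] w1(4) sp e by auto
  ultimately show ?case by blast
qed


lemma sg_edge:
  assumes sg: "simple_graph V E" and e: "{u,w} \<in> E"
  shows "u \<noteq> w \<and> u \<in> V \<and> w \<in> V"
proof -
  obtain a b where ab: "{u,w} = {a,b}" "a \<noteq> b" "a \<in> V" "b \<in> V"
    using sg e unfolding simple_graph_def by metis
  then show ?thesis by (metis doubleton_eq_iff insert_absorb2 insert_not_empty singleton_insert_inj_eq)
qed

definition valf :: "('a \<Rightarrow> nat) \<Rightarrow> 'a set list \<Rightarrow> 'a \<Rightarrow> nat" where
  "valf a L v = a v + 2 * cnt L v"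

definition inner :: "'a set set \<Rightarrow> 'a set \<Rightarrow> 'a set set" where
  "inner E S = {e\<in>E. e \<subseteq> S}"

definition prop_on :: "('a \<Rightarrow> nat) \<Rightarrow> 'a set list \<Rightarrow> 'a set set \<Rightarrow> 'a set \<Rightarrow> bool" where
  "prop_on a L E S \<longleftrightarrow> (\<forall>u w. {u,w} \<in> E \<longrightarrow> u \<noteq> w \<longrightarrow> u \<in> S \<longrightarrow> w \<in> S \<longrightarrow> valf a L u \<noteq> valf a L w)"

lemma valf_rep: "valf a (L @ replicate x e) w = valf a L w + (if w \<in> e then 2 * x else 0)"
  unfolding valf_def cnt_app_rep by simp

lemma pick: assumes "finite (B::nat set)" shows "\<exists>x \<le> card B. x \<notin> B"
proof (rule ccontr)
  assume "\<not> ?thesis"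
  then have "{0..card B} \<subseteq> B" by auto
  then have "card {0..card B} \<le> card B" using assms by (rule card_mono[rotated])
  then show False by simp
qed

lemma vimg_card:
  assumes "finite F"
  shows "finite {x::nat. c + 2 * x \<in> F} \<and> card {x::nat. c + 2 * x \<in> F} \<le> card F"
proof -
  let ?f = "\<lambda>x::nat. c + 2 * x"
  have inj: "inj ?f" by (auto simp: inj_def)
  have eq: "{x::nat. c + 2 * x \<in> F} = ?f -` F" by auto
  have "finite (?f -` F)" using assms inj by (rule finite_vimageI)
  moreover have "card (?f -` F) \<le> card F"
    by (rule card_inj_on_le[OF inj_on_subset[OF inj]]) (auto simp: assms)
  ultimately show ?thesis using eq by simp
qed

lemma inner_fin: "finite E \<Longrightarrow> finite (inner E S)" unfolding inner_def by simp


lemma step: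
  assumes sg: "simple_graph V E"
  and v: "v \<notin> U" "v \<in> V" "p \<in> U" "{v,p} \<in> E" "U \<subseteq> V" "2 \<le> card U"
  and fl: "card U = 2 \<Longrightarrow> U = {w0,w1} \<and> w0 \<noteq> w1"
  and L: "set L \<subseteq> E" "length L \<le> card (inner E (V - insert v U))" "prop_on a L E (V - insert v U)"
  shows "\<exists>L'. set L' \<subseteq> E \<and> length L' \<le> card (inner E (V - U)) + (if card U = 2 then 1 else 0)
     \<and> prop_on a L' E (V - U) \<and> (card U = 2 \<longrightarrow> valf a L' w0 \<noteq> valf a L' w1)"
proof -
  define S where "S = V - insert v U"
  have S': "V - U = insert v S" using v unfolding S_def by auto
  have vS: "v \<notin> S" unfolding S_def by auto
  have finV: "finite V" using sg simple_graph_def by auto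
  have finE: "finite E" using sg_finE[OF sg] .
  have vp: "v \<noteq> p" using sg_edge[OF sg v(4)] by simp
  have pS: "p \<notin> insert v S" using v(3) vp unfolding S_def by auto
  define N where "N = {w\<in>S. {v,w} \<in> E}"
  have finN: "finite N" using finV unfolding N_def S_def by auto
  define F where "F = valf a L ` N"
  have finF: "finite F" using finN unfolding F_def by simp
  have cF: "card F \<le> card N" unfolding F_def using finN by (rule card_image_le)
  define B1 where "B1 = {x. valf a L v + 2*x \<in> F}"
  have B1: "finite B1" "card B1 \<le> card N" using vimg_card[OF finF, of "valf a L v"] cF unfolding B1_def by auto
  define B2 where "B2 = (if card U = 2 then {x. valf a (L @ replicate x {v,p}) w0 = valf a (L @ replicate x {v,p}) w1} else {})"
  have B2: "finite B2 \<and> card B2 \<le> (if card U = 2 then 1 else 0)"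
  proof (cases "card U = 2")
    case False
    then show ?thesis unfolding B2_def by simp
  next
    case True
    then have U: "U = {w0,w1}" "w0 \<noteq> w1" using fl by auto
    have vw: "v \<noteq> w0" "v \<noteq> w1" using U v(1) by auto
    have "\<exists>c. B2 \<subseteq> {c}"
    proof (cases "p = w0")
      case True
      then have "B2 = {x. valf a L w0 + 2 * x = valf a L w1}"
        unfolding B2_def using \<open>card U = 2\<close> U vw by (auto simp: valf_rep)
      then show ?thesis by (intro exI[of _ "(valf a L w1 - valf a L w0) div 2"]) auto
    next
      case False
      then have "p = w1" using U v(3) by auto
      then have "B2 = {x. valf a L w0 = valf a L w1 + 2 * x}"
        unfolding B2_def using \<open>card U = 2\<close> U vw by (auto simp: valf_rep)
      then show ?thesis by (intro exI[of _ "(valf a L w0 - valf a L w1) div 2"]) auto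
    qed
    then obtain c where "B2 \<subseteq> {c}" by blast
    then have "finite B2" "card B2 \<le> card {c}" using finite_subset card_mono[of "{c}" B2] by auto
    then show ?thesis using True by simp
  qed
  have finB: "finite (B1 \<union> B2)" using B1 B2 by simp
  obtain x where x: "x \<le> card (B1 \<union> B2)" "x \<notin> B1 \<union> B2" using pick[OF finB] by blast
  have cx: "x \<le> card N + (if card U = 2 then 1 else 0)"
    using x(1) card_Un_le[of B1 B2] B1 B2 by linarith
  define L' where "L' = L @ replicate x {v,p}"
  have val': "valf a L' w = valf a L w + (if w = v \<or> w = p then 2*x else 0)" for w
    unfolding L'_def valf_rep by simp
  have cardinner: "card (inner E S) + card N \<le> card (inner E (V - U))"
  proof -
    have sub: "inner E S \<union> (\<lambda>w. {v,w}) ` N \<subseteq> inner E (V - U)"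
      unfolding inner_def N_def S' by auto
    have disj: "inner E S \<inter> (\<lambda>w. {v,w}) ` N = {}" using vS unfolding inner_def by auto
    have inj: "inj_on (\<lambda>w. {v,w}) N" unfolding inj_on_def N_def using vS
      by (auto simp: doubleton_eq_iff)
    have "card (inner E S \<union> (\<lambda>w. {v,w}) ` N) = card (inner E S) + card N"
      using card_Un_disjoint[OF inner_fin[OF finE] _ disj] finN card_image[OF inj] by simp
    moreover have "card (inner E S \<union> (\<lambda>w. {v,w}) ` N) \<le> card (inner E (V - U))"
      by (rule card_mono[OF inner_fin[OF finE] sub])
    ultimately show ?thesis by simp
  qed
  have len: "length L' \<le> card (inner E (V - U)) + (if card U = 2 then 1 else 0)"
    using L(2) cx cardinner unfolding L'_def S_def[symmetric] by simp
  have setL: "set L' \<subseteq> E" using L(1) v(4) unfolding L'_def by auto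
  have key: "valf a L' u \<noteq> valf a L' w" if uw: "{u,w} \<in> E" "u \<noteq> w" "u = v" "w \<in> S" for u w
  proof -
    have "w \<in> N" using uw unfolding N_def by auto
    then have "valf a L w \<in> F" unfolding F_def by simp
    moreover have "valf a L v + 2 * x \<notin> F" using x(2) unfolding B1_def by auto
    moreover have "w \<noteq> v" "w \<noteq> p" using uw vS pS by auto
    ultimately show ?thesis using uw val' by auto
  qed
  have prop': "prop_on a L' E (V - U)"
    unfolding prop_on_def
  proof (intro allI impI)
    fix u w assume uw: "{u,w} \<in> E" "u \<noteq> w" "u \<in> V - U" "w \<in> V - U"
    show "valf a L' u \<noteq> valf a L' w"
    proof (cases "u = v")
      case True
      then show ?thesis using key uw S' by auto
    next
      case False
      note uv = False
      show ?thesis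
      proof (cases "w = v")
        case True
        then have "{w,u} \<in> E" using uw by (simp add: insert_commute)
        then show ?thesis using key[of w u] uw S' True uv by auto
      next
        case False
        then have "u \<in> S" "w \<in> S" using uw uv S' by auto
        moreover have "u \<noteq> p" "w \<noteq> p" using pS calculation by auto
        ultimately show ?thesis using L(3) uw uv False val'[of u] val'[of w]
          unfolding prop_on_def S_def by auto
      qed
    qed
  qed
  have flag: "card U = 2 \<longrightarrow> valf a L' w0 \<noteq> valf a L' w1"
    using x(2) unfolding B2_def L'_def by auto
  show ?thesis using setL len prop' flag by blast
qed


lemma final:
  assumes sg: "simple_graph V E"
  and w: "{w0,w1} \<in> E"
  and L: "set L \<subseteq> E" "length L \<le> card (inner E (V - {w0,w1})) + 1" "prop_on a L E (V - {w0,w1})"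
    "valf a L w0 \<noteq> valf a L w1"
  shows "\<exists>L'. set L' \<subseteq> E \<and> length L' \<le> card E \<and> prop_on a L' E V"
proof -
  have ww: "w0 \<noteq> w1" "w0 \<in> V" "w1 \<in> V" using sg_edge[OF sg w] by auto
  define S where "S = V - {w0,w1}"
  have finV: "finite V" using sg simple_graph_def by auto
  have finE: "finite E" using sg_finE[OF sg] .
  define N0 where "N0 = {w\<in>S. {w0,w} \<in> E}"
  define N1 where "N1 = {w\<in>S. {w1,w} \<in> E}"
  have finN: "finite N0" "finite N1" using finV unfolding N0_def N1_def S_def by auto
  define F0 where "F0 = valf a L ` N0"
  define F1 where "F1 = valf a L ` N1"
  have finF: "finite F0" "finite F1" using finN unfolding F0_def F1_def by auto
  have cF: "card F0 \<le> card N0" "card F1 \<le> card N1"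
    unfolding F0_def F1_def using finN by (auto intro: card_image_le)
  define B0 where "B0 = {x. valf a L w0 + 2*x \<in> F0}"
  define B1 where "B1 = {x. valf a L w1 + 2*x \<in> F1}"
  have B0: "finite B0" "card B0 \<le> card N0" using vimg_card[OF finF(1), of "valf a L w0"] cF unfolding B0_def by auto
  have B1: "finite B1" "card B1 \<le> card N1" using vimg_card[OF finF(2), of "valf a L w1"] cF unfolding B1_def by auto
  have finB: "finite (B0 \<union> B1)" using B0 B1 by simp
  obtain x where x: "x \<le> card (B0 \<union> B1)" "x \<notin> B0 \<union> B1" using pick[OF finB] by blast
  have cx: "x \<le> card N0 + card N1"
    using x(1) card_Un_le[of B0 B1] B0 B1 by linarith
  define L' where "L' = L @ replicate x {w0,w1}"
  have val': "valf a L' w = valf a L w + (if w = w0 \<or> w = w1 then 2*x else 0)" for w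
    unfolding L'_def valf_rep by simp
  have cardE: "card (inner E S) + card N0 + card N1 + 1 \<le> card E"
  proof -
    let ?I0 = "(\<lambda>w. {w0,w}) ` N0" and ?I1 = "(\<lambda>w. {w1,w}) ` N1"
    have sub: "inner E S \<union> ?I0 \<union> ?I1 \<union> {{w0,w1}} \<subseteq> E"
      unfolding inner_def N0_def N1_def using w by auto
    have inj0: "inj_on (\<lambda>w. {w0,w}) N0" unfolding inj_on_def N0_def S_def
      by (auto simp: doubleton_eq_iff)
    have inj1: "inj_on (\<lambda>w. {w1,w}) N1" unfolding inj_on_def N1_def S_def
      by (auto simp: doubleton_eq_iff)
    have d1: "inner E S \<inter> ?I0 = {}" unfolding inner_def S_def by auto
    have d2: "(inner E S \<union> ?I0) \<inter> ?I1 = {}" unfolding inner_def S_def N0_def N1_def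
      using ww(1) by (auto simp: doubleton_eq_iff)
    have d3: "(inner E S \<union> ?I0 \<union> ?I1) \<inter> {{w0,w1}} = {}" unfolding inner_def S_def N0_def N1_def
      using ww(1) by (auto simp: doubleton_eq_iff)
    have f0: "finite (inner E S)" using inner_fin[OF finE] .
    have "card (inner E S \<union> ?I0 \<union> ?I1 \<union> {{w0,w1}}) = card (inner E S) + card N0 + card N1 + 1"
      using card_Un_disjoint[OF f0 _ d1] card_Un_disjoint[OF _ _ d2] card_Un_disjoint[OF _ _ d3]
        finN card_image[OF inj0] card_image[OF inj1] f0 by simp
    moreover have "card (inner E S \<union> ?I0 \<union> ?I1 \<union> {{w0,w1}}) \<le> card E"
      by (rule card_mono[OF finE sub])
    ultimately show ?thesis by simp
  qed
  have len: "length L' \<le> card E"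
    using L(2) cx cardE unfolding L'_def S_def[symmetric] by simp
  have setL: "set L' \<subseteq> E" using L(1) w unfolding L'_def by auto
  have key: "valf a L' u \<noteq> valf a L' w" if uw: "{u,w} \<in> E" "u \<noteq> w" "u \<in> V" "w \<in> V" "u = w0 \<or> u = w1" for u w
  proof (cases "w \<in> S")
    case True
    then have wne: "w \<noteq> w0" "w \<noteq> w1" unfolding S_def by auto
    show ?thesis
    proof (cases "u = w0")
      case True
      then have "w \<in> N0" using uw \<open>w \<in> S\<close> unfolding N0_def by auto
      then have "valf a L w \<in> F0" unfolding F0_def by simp
      moreover have "valf a L w0 + 2 * x \<notin> F0" using x(2) unfolding B0_def by auto
      ultimately show ?thesis using True wne val' by auto
    next
      case False
      then have u1: "u = w1" using uw by auto
      then have "w \<in> N1" using uw \<open>w \<in> S\<close> unfolding N1_def by auto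
      then have "valf a L w \<in> F1" unfolding F1_def by simp
      moreover have "valf a L w1 + 2 * x \<notin> F1" using x(2) unfolding B1_def by auto
      ultimately show ?thesis using u1 wne val' by auto
    qed
  next
    case False
    then have "w = w0 \<or> w = w1" using uw unfolding S_def by auto
    then show ?thesis using uw L(4) val' by auto
  qed
  have prop': "prop_on a L' E V"
    unfolding prop_on_def
  proof (intro allI impI)
    fix u w assume uw: "{u,w} \<in> E" "u \<noteq> w" "u \<in> V" "w \<in> V"
    show "valf a L' u \<noteq> valf a L' w"
    proof (cases "u = w0 \<or> u = w1")
      case True
      then show ?thesis using key uw by blast
    next
      case False
      note uf = False
      show ?thesis
      proof (cases "w = w0 \<or> w = w1")
        case True
        then have "{w,u} \<in> E" using uw by (simp add: insert_commute)
        then show ?thesis using key[of w u] uw True by auto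
      next
        case False
        then have "u \<in> S" "w \<in> S" using uw uf unfolding S_def by auto
        then show ?thesis using L(3) uw uf False val'[of u] val'[of w]
          unfolding prop_on_def S_def by auto
      qed
    qed
  qed
  show ?thesis using setL len prop' by blast
qed


lemma main_inv:
  assumes sg: "simple_graph V E" and wk: "is_walk V E W" and sV: "set W = V" and c3: "3 \<le> card V"
  shows "k \<le> length W \<Longrightarrow> 2 \<le> card (set (take k W)) \<Longrightarrow>
    \<exists>L. set L \<subseteq> E \<and> length L \<le> card (inner E (V - set (take k W))) + (if card (set (take k W)) = 2 then 1 else 0)
      \<and> prop_on a L E (V - set (take k W)) \<and> (card (set (take k W)) = 2 \<longrightarrow> valf a L (W!0) \<noteq> valf a L (W!1))"
proof (induction "length W - k" arbitrary: k)
  case 0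
  then have "k = length W" by simp
  then have "set (take k W) = V" using sV by simp
  then show ?case using c3 by (intro exI[of _ "[]"]) (auto simp: prop_on_def)
next
  case (Suc d)
  have finV: "finite V" using sg simple_graph_def by auto
  have kl: "k < length W" using Suc by simp
  define U where "U = set (take k W)"
  have tk: "set (take (Suc k) W) = insert (W!k) U" unfolding U_def using kl
    by (simp add: take_Suc_conv_app_nth)
  have UV: "U \<subseteq> V" unfolding U_def using sV set_take_subset by metis
  have finU: "finite U" using UV finV finite_subset by auto
  have cU: "2 \<le> card U" using Suc unfolding U_def by simp
  have "card U \<le> card (insert (W!k) U)" using finU by (intro card_mono) auto
  then have cU': "2 \<le> card (insert (W!k) U)" using cU by linarith
  have IH: "\<exists>L. set L \<subseteq> E \<and> length L \<le> card (inner E (V - insert (W!k) U)) + (if card (insert (W!k) U) = 2 then 1 else 0)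
      \<and> prop_on a L E (V - insert (W!k) U) \<and> (card (insert (W!k) U) = 2 \<longrightarrow> valf a L (W!0) \<noteq> valf a L (W!1))"
    using Suc.hyps(1)[of "Suc k"] Suc.hyps(2) kl cU' tk by simp
  show ?case
  proof (cases "W!k \<in> U")
    case True
    then show ?thesis using IH unfolding U_def by (simp add: insert_absorb)
  next
    case False
    have "card U \<le> length (take k W)" unfolding U_def by (rule card_length)
    then have k2: "2 \<le> k" using cU by simp
    define p where "p = W!(k-1)"
    have "take k W ! (k-1) \<in> set (take k W)" using k2 kl by (intro nth_mem) simp
    then have pU: "p \<in> U" unfolding p_def U_def using k2 kl by simp
    have allE: "\<forall>i. Suc i < length W \<longrightarrow> {W!i, W!Suc i} \<in> E" using wk unfolding is_walk_def by simp
    have "{W!(k-1), W!Suc (k-1)} \<in> E" using allE[rule_format, of "k-1"] kl k2 by simp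
    then have ep: "{W!k, p} \<in> E" using k2 unfolding p_def by (simp add: insert_commute)
    have vV: "W!k \<in> V" using kl sV by auto
    have c3': "3 \<le> card (insert (W!k) U)" using cU False finU by simp
    obtain L where L: "set L \<subseteq> E" "length L \<le> card (inner E (V - insert (W!k) U))"
       "prop_on a L E (V - insert (W!k) U)" using IH c3' by auto
    have fl: "U = {W!0, W!1} \<and> W!0 \<noteq> W!1" if "card U = 2"
    proof -
      have "{W!0, W!Suc 0} \<in> E" using allE[rule_format, of 0] kl k2 by simp
      then have ne: "W!0 \<noteq> W!1" using sg_edge[OF sg, of "W!0" "W!Suc 0"] by simp
      have "{W!0, W!1} \<subseteq> U" unfolding U_def using k2 kl
        using nth_mem[of 0 "take k W"] nth_mem[of 1 "take k W"] by simp
      moreover have "card {W!0, W!1} = card U" using ne that by simp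
      ultimately have "{W!0, W!1} = U" using finU card_subset_eq by metis
      then show ?thesis using ne by simp
    qed
    show ?thesis
      using step[OF sg False vV pU ep UV cU fl L] unfolding U_def by simp
  qed
qed


theorem theorem4p1:
  fixes V :: "'a set" and E :: "'a set set" and W :: "'a list" and m p :: nat
  assumes "simple_graph V E"
    and "nice_graph V E"
    and "m = card E"
    and "closed_walk V E W"
    and "walk_length W = p"
    and "set W = V"
  shows "(\<exists>W'. irregularising V E W') \<and> min_irreg_walk_length V E \<le> p + 2 * m"
proof -
  note sg = assms(1)
  have wk: "is_walk V E W" using assms(4) unfolding closed_walk_def by simp
  have sV: "set W = V" by fact
  have finV: "finite V" using sg simple_graph_def by auto
  have allE: "\<forall>i. Suc i < length W \<longrightarrow> {W!i, W!Suc i} \<in> E" using wk unfolding is_walk_def by simp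
  have Wne: "W \<noteq> []" using wk unfolding is_walk_def by simp
  have cl: "card V \<le> length W" using card_length[of W] sV by simp
  have "\<exists>W'. irregularising V E W' \<and> walk_length W' \<le> p + 2 * m"
  proof (cases "3 \<le> card V")
    case False
    have "card V \<noteq> 0" using finV Wne sV by auto
    then consider "card V = 1" | "card V = 2" using False by linarith
    then show ?thesis
    proof cases
      case 1
      then obtain x where Vx: "V = {x}" using card_1_singletonE by blast
      have "E = {}"
      proof (rule ccontr)
        assume "E \<noteq> {}"
        then obtain e where "e \<in> E" by blast
        then obtain u w where "e = {u,w}" "u \<noteq> w" "u \<in> V" "w \<in> V" using sg unfolding simple_graph_def by metis
        then show False using Vx by simp
      qed
      then have "irregularising V E W" using wk unfolding irregularising_def by simp
      then show ?thesis using assms(5) by auto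
    next
      case 2
      then have l2: "2 \<le> length W" using cl by simp
      have e01: "{W!0, W!Suc 0} \<in> E" using allE[rule_format, of 0] l2 by simp
      have ne: "W!0 \<noteq> W!Suc 0" "W!0 \<in> V" "W!Suc 0 \<in> V" using sg_edge[OF sg e01] by auto
      then have "{W!0, W!Suc 0} \<subseteq> V" "card {W!0, W!Suc 0} = card V" using 2 by auto
      then have V2: "V = {W!0, W!Suc 0}" using finV card_subset_eq by metis
      have "E = {{W!0, W!Suc 0}}"
      proof
        show "E \<subseteq> {{W!0, W!Suc 0}}"
        proof
          fix e assume "e \<in> E"
          then obtain u w where "e = {u,w}" "u \<noteq> w" "u \<in> V" "w \<in> V" using sg unfolding simple_graph_def by metis
          then show "e \<in> {{W!0, W!Suc 0}}" using V2 by auto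
        qed
      qed (use e01 in simp)
      then have "card E = 1" by simp
      then show ?thesis using assms(2) 2 unfolding nice_graph_def by simp
    qed
  next
    case True
    then have l2: "2 \<le> length W" using cl by simp
    have e01: "{W!0, W!Suc 0} \<in> E" using allE[rule_format, of 0] l2 by simp
    have ne: "W!0 \<noteq> W!Suc 0" using sg_edge[OF sg e01] by auto
    have t2: "set (take 2 W) = {W!0, W!Suc 0}" using l2
    proof -
      have "take (Suc 0) W = [W!0]" using Wne by (cases W) auto
      then show ?thesis using l2 by (simp add: take_Suc_conv_app_nth numeral_2_eq_2 insert_commute)
    qed
    define a where "a = deg_plus E W"
    obtain L where L: "set L \<subseteq> E" "length L \<le> card (inner E (V - {W!0, W!Suc 0})) + 1"
      "prop_on a L E (V - {W!0, W!Suc 0})" "valf a L (W!0) \<noteq> valf a L (W!1)"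
      using main_inv[OF sg wk sV True, of 2 a] l2 t2 ne by auto
    obtain L' where L': "set L' \<subseteq> E" "length L' \<le> card E" "prop_on a L' E V"
      using final[OF sg e01 L(1,2,3)] L(4) by auto
    obtain W' where W': "is_walk V E W'" "length W' = length W + 2 * length L'"
      "\<forall>v. deg_plus E W' v = deg_plus E W v + 2 * cnt L' v"
      using ext_walk[OF sg wk sV L'(1)] by auto
    have "irregularising V E W'"
      unfolding irregularising_def
    proof (intro conjI allI impI)
      show "is_walk V E W'" by fact
      fix u w assume uw: "{u,w} \<in> E" "u \<noteq> w"
      then have "u \<in> V" "w \<in> V" using sg_edge[OF sg uw(1)] by auto
      then have "valf a L' u \<noteq> valf a L' w" using L'(3) uw unfolding prop_on_def by blast
      then show "deg_plus E W' u \<noteq> deg_plus E W' w" using W'(3) unfolding valf_def a_def by simp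
    qed
    moreover have "walk_length W' \<le> p + 2 * m"
    proof -
      have "length W \<ge> 1" using Wne by (cases W) auto
      then show ?thesis using W'(2) L'(2) assms(3,5) unfolding walk_length_def by simp
    qed
    ultimately show ?thesis by blast
  qed
  then obtain W' where W': "irregularising V E W'" "walk_length W' \<le> p + 2 * m" by blast
  have "min_irreg_walk_length V E \<le> walk_length W'"
    unfolding min_irreg_walk_length_def using W'(1) by (intro Least_le) blast
  then show ?thesis using W' by auto
qed

end
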